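(* Let $\varphi$ be a quantifier-free Presburger formula with exactly one free variable. Then $|\varphi|_{\mathsf{p}}\le 2^{|\varphi|}$.
   Context: Quantifier-free Presburger formulas are Boolean combinations of atoms $\sum a_ix_i\le b$ and $\sum a_ix_i\equiv b\pmod c$, integer constants written in binary; $|\varphi|$ is the number of symbols needed to write $\varphi$ (constants in binary). A set $S\subseteq\mathbb{Z}$ is ultimately periodic if there are $n_0,p\in\mathbb{N}$, $p\ge1$, such that for all $n\in\mathbb{Z}$ with $|n|\ge n_0$, $n+p\in S$ iff $n\in S$; such $p$ is a period of $S$. Every Presburger formula with one free variable defines an ultimately periodic set, and $|\varphi|_{\mathsf{p}}$ denotes the smallest period of the set defined by $\varphi$. *)

theory Defs
  imports Main
begin

text \<open>A linear term sum a_i x_i is a list of pairs (coefficient, variable index).\<close>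
type_synonym lterm = "(int \<times> nat) list"

datatype qf_pres =
    Le lterm int
  | Cong lterm int nat
  | Neg qf_pres
  | Conj qf_pres qf_pres
  | Disj qf_pres qf_pres

definition tval :: "lterm \<Rightarrow> (nat \<Rightarrow> int) \<Rightarrow> int" where
  "tval t \<sigma> = (\<Sum>(a, i)\<leftarrow>t. a * \<sigma> i)"

fun sat :: "qf_pres \<Rightarrow> (nat \<Rightarrow> int) \<Rightarrow> bool" where
  "sat (Le t b) \<sigma> = (tval t \<sigma> \<le> b)"
| "sat (Cong t b c) \<sigma> = (tval t \<sigma> mod int c = b mod int c)"
| "sat (Neg \<phi>) \<sigma> = (\<not> sat \<phi> \<sigma>)"
| "sat (Conj \<phi> \<psi>) \<sigma> = (sat \<phi> \<sigma> \<and> sat \<psi> \<sigma>)"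
| "sat (Disj \<phi> \<psi>) \<sigma> = (sat \<phi> \<sigma> \<or> sat \<psi> \<sigma>)"

fun fv :: "qf_pres \<Rightarrow> nat set" where
  "fv (Le t b) = snd ` set t"
| "fv (Cong t b c) = snd ` set t"
| "fv (Neg \<phi>) = fv \<phi>"
| "fv (Conj \<phi> \<psi>) = fv \<phi> \<union> fv \<psi>"
| "fv (Disj \<phi> \<psi>) = fv \<phi> \<union> fv \<psi>"

fun bitlen :: "nat \<Rightarrow> nat" where
  "bitlen n = (if n < 2 then 1 else Suc (bitlen (n div 2)))"

definition isize :: "int \<Rightarrow> nat" where
  "isize a = bitlen (nat \<bar>a\<bar>) + (if a < 0 then 1 else 0)"

text \<open>Each summand a x_i costs the digits of a plus one symbol for the variable,
  plus one symbol per summand for the separating plus signs.\<close>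
definition tsize :: "lterm \<Rightarrow> nat" where
  "tsize t = (\<Sum>(a, i)\<leftarrow>t. isize a + 2)"

fun size_f :: "qf_pres \<Rightarrow> nat" where
  "size_f (Le t b) = tsize t + 1 + isize b"
| "size_f (Cong t b c) = tsize t + 1 + isize b + 1 + bitlen c"
| "size_f (Neg \<phi>) = 1 + size_f \<phi>"
| "size_f (Conj \<phi> \<psi>) = 1 + size_f \<phi> + size_f \<psi>"
| "size_f (Disj \<phi> \<psi>) = 1 + size_f \<phi> + size_f \<psi>"

definition is_period :: "int set \<Rightarrow> nat \<Rightarrow> bool" where
  "is_period S p \<longleftrightarrow> p \<ge> 1 \<and>
     (\<exists>n0::nat. \<forall>n::int. \<bar>n\<bar> \<ge> int n0 \<longrightarrow> (n + int p \<in> S \<longleftrightarrow> n \<in> S))"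

definition ult_periodic :: "int set \<Rightarrow> bool" where
  "ult_periodic S \<longleftrightarrow> (\<exists>p. is_period S p)"

definition min_period :: "int set \<Rightarrow> nat" where
  "min_period S = (LEAST p. is_period S p)"

definition defined_set :: "qf_pres \<Rightarrow> nat \<Rightarrow> int set" where
  "defined_set \<phi> v = {n. sat \<phi> (\<lambda>i. if i = v then n else 0)}"

end

theory Submission
  imports Defs
begin

lemma period_mult:
  assumes "is_period S p" "k \<ge> 1"
  shows "is_period S (p * k)"
proof -
  from assms(1) obtain n0 where p1: "p \<ge> 1"
    and n0: "\<forall>n::int. \<bar>n\<bar> \<ge> int n0 \<longrightarrow> (n + int p \<in> S \<longleftrightarrow> n \<in> S)"
    unfolding is_period_def by blast
  have key: "j \<le> k \<Longrightarrow> (n + int j * int p \<in> S \<longleftrightarrow> n \<in> S)"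
    if "\<bar>n\<bar> \<ge> int (n0 + p * k)" for n j
  proof (induction j)
    case 0 then show ?case by simp
  next
    case (Suc j)
    have jk: "j < k" using Suc by simp
    have "int j + 1 \<le> int k" using jk by simp
    hence "(int j + 1) * int p \<le> int k * int p" by (rule mult_right_mono) simp
    hence "int j * int p \<le> int k * int p - int p" by (simp add: algebra_simps)
    hence "\<bar>n + int j * int p\<bar> \<ge> int n0"
    proof -
      have "0 \<le> int j * int p" "int p \<ge> 1" "int (n0 + p * k) = int n0 + int k * int p" using p1 by auto
      then show ?thesis using that \<open>int j * int p \<le> int k * int p - int p\<close> by linarith
    qed
    hence "(n + int j * int p + int p \<in> S) = (n + int j * int p \<in> S)" using n0 by blast
    moreover have "n + int (Suc j) * int p = n + int j * int p + int p" by (simp add: algebra_simps)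
    ultimately show ?case using Suc by (simp add: add.assoc)
  qed
  show ?thesis unfolding is_period_def
  proof (intro conjI exI allI impI)
    show "1 \<le> p * k" using p1 assms(2) by simp
    fix n :: int assume "int (n0 + p * k) \<le> \<bar>n\<bar>"
    from key[OF this, of k] show "(n + int (p * k) \<in> S) = (n \<in> S)" by (simp add: mult.commute)
  qed
qed

lemma period_int:
  assumes "is_period A p" "is_period B p"
  shows "is_period (A \<inter> B) p"
proof -
  from assms obtain a b where "p \<ge> 1"
    and a: "\<forall>n::int. \<bar>n\<bar> \<ge> int a \<longrightarrow> (n + int p \<in> A \<longleftrightarrow> n \<in> A)"
    and b: "\<forall>n::int. \<bar>n\<bar> \<ge> int b \<longrightarrow> (n + int p \<in> B \<longleftrightarrow> n \<in> B)"
    unfolding is_period_def by blast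
  then show ?thesis unfolding is_period_def
    by (intro conjI exI[of _ "a + b"]) auto
qed

lemma period_un:
  assumes "is_period A p" "is_period B p"
  shows "is_period (A \<union> B) p"
proof -
  from assms obtain a b where "p \<ge> 1"
    and a: "\<forall>n::int. \<bar>n\<bar> \<ge> int a \<longrightarrow> (n + int p \<in> A \<longleftrightarrow> n \<in> A)"
    and b: "\<forall>n::int. \<bar>n\<bar> \<ge> int b \<longrightarrow> (n + int p \<in> B \<longleftrightarrow> n \<in> B)"
    unfolding is_period_def by blast
  then show ?thesis unfolding is_period_def
    by (intro conjI exI[of _ "a + b"]) auto
qed

lemma period_compl:
  assumes "is_period A p"
  shows "is_period (- A) p"
  using assms unfolding is_period_def by auto

lemma tval_single:
  "tval t (\<lambda>i. if i = v then n else 0) = (\<Sum>(a, i)\<leftarrow>t. if i = v then a else 0) * n"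
  unfolding tval_def by (induction t) (auto simp: algebra_simps)

lemma bitlen_gt: "n < 2 ^ bitlen n"
proof (induction n rule: bitlen.induct)
  case (1 n)
  show ?case
  proof (cases "n < 2")
    case True then show ?thesis by simp
  next
    case False
    then have "n div 2 < 2 ^ bitlen (n div 2)" using 1 by simp
    then show ?thesis using False by simp
  qed
qed

lemma le_period:
  fixes A b :: int
  shows "is_period {n. A * n \<le> b} 1"
  unfolding is_period_def
proof (intro conjI exI allI impI)
  fix n :: int assume h: "int (nat \<bar>b\<bar> + 2) \<le> \<bar>n\<bar>"
  show "(n + int 1 \<in> {n. A * n \<le> b}) = (n \<in> {n. A * n \<le> b})"
  proof (cases "A = 0")
    case True then show ?thesis by simp
  next
    case False
    have m1: "\<bar>A * n\<bar> \<ge> \<bar>n\<bar>" "\<bar>A * (n+1)\<bar> \<ge> \<bar>n+1\<bar>" using False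
    proof -
      have a1: "1 \<le> \<bar>A\<bar>" using False by (cases "A > 0") auto
      have "\<bar>x\<bar> \<le> \<bar>A * x\<bar>" for x :: int
        using mult_right_mono[OF a1, of "\<bar>x\<bar>"] by (simp add: abs_mult)
      then show "\<bar>A * n\<bar> \<ge> \<bar>n\<bar>" "\<bar>A * (n+1)\<bar> \<ge> \<bar>n+1\<bar>" by blast+
    qed
    have c1: "A * n > b \<and> A * (n+1) > b" if "A > 0" "n > \<bar>b\<bar>"
    proof -
      have "A * n > 0" "A * (n+1) > 0" using that by (simp_all add: zero_less_mult_iff)
      then show ?thesis using m1 that by linarith
    qed
    have c2: "A * n < b \<and> A * (n+1) < b" if "A < 0" "n > \<bar>b\<bar>"
    proof -
      have "A * n < 0" "A * (n+1) < 0" using that by (simp_all add: mult_less_0_iff)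
      then show ?thesis using m1 that by linarith
    qed
    have c3: "A * n > b \<and> A * (n+1) > b" if "A < 0" "n + 1 < - \<bar>b\<bar>" "n < 0"
    proof -
      have "A * n > 0" "A * (n+1) \<ge> 0" using that by (simp_all add: zero_less_mult_iff zero_le_mult_iff)
      then show ?thesis using m1 that by linarith
    qed
    have c4: "A * n < b \<and> A * (n+1) \<le> b" if "A > 0" "n + 1 < - \<bar>b\<bar>" "n < 0"
    proof -
      have "A * n < 0" "A * (n+1) \<le> 0" using that by (simp_all add: mult_less_0_iff mult_le_0_iff)
      then show ?thesis using m1 that by linarith
    qed
    show ?thesis
    proof (cases "n \<ge> 0")
      case True
      then have "n > \<bar>b\<bar>" using h by simp
      then show ?thesis using c1 c2 False by (cases "A > 0") auto
    next
      case nn: False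
      then have "n + 1 < - \<bar>b\<bar>" using h by simp
      then show ?thesis using c3 c4 False nn by (cases "A > 0") auto
    qed
  qed
qed simp

lemma eq_period:
  fixes A b :: int
  shows "is_period {n. A * n = b} 1"
  unfolding is_period_def
proof (intro conjI exI allI impI)
  fix n :: int assume h: "int (nat \<bar>b\<bar> + 2) \<le> \<bar>n\<bar>"
  show "(n + int 1 \<in> {n. A * n = b}) = (n \<in> {n. A * n = b})"
  proof (cases "A = 0")
    case True then show ?thesis by simp
  next
    case False
    have "\<bar>A * n\<bar> \<ge> \<bar>n\<bar>" "\<bar>A * (n+1)\<bar> \<ge> \<bar>n+1\<bar>" using False
    proof -
      have a1: "1 \<le> \<bar>A\<bar>" using False by (cases "A > 0") auto
      have "\<bar>x\<bar> \<le> \<bar>A * x\<bar>" for x :: int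
        using mult_right_mono[OF a1, of "\<bar>x\<bar>"] by (simp add: abs_mult)
      then show "\<bar>A * n\<bar> \<ge> \<bar>n\<bar>" "\<bar>A * (n+1)\<bar> \<ge> \<bar>n+1\<bar>" by blast+
    qed
    then show ?thesis using h by auto
  qed
qed simp

lemma cong_period:
  fixes A b :: int
  assumes "c \<ge> 1"
  shows "is_period {n. A * n mod int c = b} c"
  unfolding is_period_def
proof (intro conjI exI allI impI)
  fix n :: int
  show "(n + int c \<in> {n. A * n mod int c = b}) = (n \<in> {n. A * n mod int c = b})"
    by (simp add: distrib_left)
qed (use assms in auto)

lemma main:
  "\<exists>p. is_period (defined_set \<phi> v) p \<and> p \<le> 2 ^ size_f \<phi>"
proof (induction \<phi>)
  case (Le t b)
  have "defined_set (Le t b) v = {n. (\<Sum>(a, i)\<leftarrow>t. if i = v then a else 0) * n \<le> b}"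
    by (simp add: defined_set_def tval_single)
  then show ?case using le_period
    by (intro exI[of _ 1]) simp
next
  case (Cong t b c)
  define A where "A = (\<Sum>(a, i)\<leftarrow>t. if i = v then a else 0)"
  have ds: "defined_set (Cong t b c) v = {n. A * n mod int c = b mod int c}"
    by (simp add: defined_set_def tval_single A_def)
  show ?case
  proof (cases "c = 0")
    case True
    then have "defined_set (Cong t b c) v = {n. A * n = b}" using ds by simp
    then show ?thesis using eq_period[of A b] by (intro exI[of _ 1]) simp
  next
    case False
    have "c < 2 ^ bitlen c" by (rule bitlen_gt)
    also have "(2::nat) ^ bitlen c \<le> 2 ^ size_f (Cong t b c)" by (rule power_increasing) auto
    finally have "c \<le> 2 ^ size_f (Cong t b c)" by (rule less_imp_le)
    moreover have "is_period (defined_set (Cong t b c) v) c"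
      unfolding ds by (rule cong_period) (use False in simp)
    ultimately show ?thesis by blast
  qed
next
  case (Neg \<phi>)
  then obtain p where p: "is_period (defined_set \<phi> v) p" "p \<le> 2 ^ size_f \<phi>" by blast
  have e: "defined_set (Neg \<phi>) v = - defined_set \<phi> v" by (auto simp: defined_set_def)
  have "(2::nat) ^ size_f \<phi> \<le> 2 ^ size_f (Neg \<phi>)" by (rule power_increasing) auto
  then have "p \<le> 2 ^ size_f (Neg \<phi>)" using p(2) by linarith
  moreover have "is_period (defined_set (Neg \<phi>) v) p" unfolding e by (rule period_compl[OF p(1)])
  ultimately show ?case by blast
next
  case (Conj \<phi> \<psi>)
  then obtain p q where p: "is_period (defined_set \<phi> v) p" "p \<le> 2 ^ size_f \<phi>"
    and q: "is_period (defined_set \<psi> v) q" "q \<le> 2 ^ size_f \<psi>" by blast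
  have p1: "p \<ge> 1" "q \<ge> 1" using p(1) q(1) unfolding is_period_def by blast+
  have a: "is_period (defined_set \<phi> v) (p * q)" by (rule period_mult[OF p(1) p1(2)])
  have b: "is_period (defined_set \<psi> v) (p * q)"
    using period_mult[OF q(1) p1(1)] by (simp add: mult.commute)
  have e: "defined_set (Conj \<phi> \<psi>) v = defined_set \<phi> v \<inter> defined_set \<psi> v" by (auto simp: defined_set_def)
  have "p * q \<le> 2 ^ size_f \<phi> * 2 ^ size_f \<psi>" by (rule mult_le_mono[OF p(2) q(2)])
  also have "\<dots> = 2 ^ (size_f \<phi> + size_f \<psi>)" by (rule power_add[symmetric])
  also have "\<dots> \<le> 2 ^ size_f (Conj \<phi> \<psi>)" by (rule power_increasing) auto
  finally have "p * q \<le> 2 ^ size_f (Conj \<phi> \<psi>)" .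
  moreover have "is_period (defined_set (Conj \<phi> \<psi>) v) (p * q)" unfolding e by (rule period_int[OF a b])
  ultimately show ?case by blast
next
  case (Disj \<phi> \<psi>)
  then obtain p q where p: "is_period (defined_set \<phi> v) p" "p \<le> 2 ^ size_f \<phi>"
    and q: "is_period (defined_set \<psi> v) q" "q \<le> 2 ^ size_f \<psi>" by blast
  have p1: "p \<ge> 1" "q \<ge> 1" using p(1) q(1) unfolding is_period_def by blast+
  have a: "is_period (defined_set \<phi> v) (p * q)" by (rule period_mult[OF p(1) p1(2)])
  have b: "is_period (defined_set \<psi> v) (p * q)"
    using period_mult[OF q(1) p1(1)] by (simp add: mult.commute)
  have e: "defined_set (Disj \<phi> \<psi>) v = defined_set \<phi> v \<union> defined_set \<psi> v" by (auto simp: defined_set_def)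
  have "p * q \<le> 2 ^ size_f \<phi> * 2 ^ size_f \<psi>" by (rule mult_le_mono[OF p(2) q(2)])
  also have "\<dots> = 2 ^ (size_f \<phi> + size_f \<psi>)" by (rule power_add[symmetric])
  also have "\<dots> \<le> 2 ^ size_f (Disj \<phi> \<psi>)" by (rule power_increasing) auto
  finally have "p * q \<le> 2 ^ size_f (Disj \<phi> \<psi>)" .
  moreover have "is_period (defined_set (Disj \<phi> \<psi>) v) (p * q)" unfolding e by (rule period_un[OF a b])
  ultimately show ?case by blast
qed

theorem lemma6p1:
  fixes \<phi> :: qf_pres and v :: nat
  assumes "fv \<phi> = {v}"
  shows "min_period (defined_set \<phi> v) \<le> 2 ^ size_f \<phi>"
proof -
  obtain p where "is_period (defined_set \<phi> v) p" "p \<le> 2 ^ size_f \<phi>" using main by blast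
  then show ?thesis unfolding min_period_def using Least_le[of "is_period (defined_set \<phi> v)" p] by linarith
qed

end
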